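(* Let $3\le d_1\le d_2\le d_3$. In $\mathbb{C}^{d_1}\otimes\mathbb{C}^{d_2}\otimes\mathbb{C}^{d_3}$ consider the following $d_2+2d_3-2$ product states: $|0-i\rangle_1|0\rangle_2|i\rangle_3$ for $1\le i\le d_1-1$; $|i\rangle_1|0-i\rangle_2|0\rangle_3$ for $1\le i\le d_1-1$; $|0\rangle_1|i\rangle_2|0-i\rangle_3$ for $1\le i\le d_2-1$; $|1\rangle_1|0-i\rangle_2|i\rangle_3$ for $d_1\le i\le d_2-1$; $|m_i\rangle_1|1\rangle_2|(i-1)-i\rangle_3$ for $d_2\le i\le d_3-1$, where $m_i=2$ if $i$ is even and $m_i=1$ if $i$ is odd; $|0-2\rangle_1|0-2\rangle_2|i\rangle_3$ for $d_1\le i\le d_3-1$; and the stopper state $|0+1+\cdots+(d_1-1)\rangle_1|0+1+\cdots+(d_2-1)\rangle_2|0+1+\cdots+(d_3-1)\rangle_3$. These states are pairwise orthogonal, and for every party $t\in\{1,2,3\}$, every orthogonality-preserving local POVM element $E_t$ on party $t$ for this set is proportional to the identity. Consequently, this set cannot be perfectly distinguished by LOCC.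
   Context: $\{|i\rangle\}$ is the computational basis; $|i_1\pm i_2\pm\cdots\pm i_r\rangle$ denotes $\frac{1}{\sqrt r}(|i_1\rangle\pm|i_2\rangle\pm\cdots\pm|i_r\rangle)$; subscripts indicate the party; ranges $a\le i\le b$ with $a>b$ are empty. For a set $\{|\psi_a\rangle\}$ of pairwise orthogonal states in $\mathbb{C}^{d_1}\otimes\cdots\otimes\mathbb{C}^{d_n}$, a positive semidefinite operator $E_t$ on $\mathbb{C}^{d_t}$ (a POVM element $M_t^\dagger M_t$ of a measurement by party $t$) is called orthogonality-preserving if $\langle\psi_a|(\mathbb{I}\otimes\cdots\otimes E_t\otimes\cdots\otimes\mathbb{I})|\psi_b\rangle=0$ for all $a\neq b$; the measurement is trivial if all its POVM elements are proportional to the identity. A set of orthogonal states for which every party can only perform trivial orthogonality-preserving measurements cannot be perfectly distinguished by LOCC. *)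

theory Defs
  imports Complex_Main
begin

text \<open>Vectors of C^d are functions nat => complex, only the entries with index < d matter.
  Operators on C^d are matrices nat => nat => complex (entries with indices < d matter).\<close>

type_synonym cvec = "nat \<Rightarrow> complex"
type_synonym cmat = "nat \<Rightarrow> nat \<Rightarrow> complex"
type_synonym tvec = "nat \<times> nat \<times> nat \<Rightarrow> complex"

definition ket :: "nat \<Rightarrow> cvec" where
  "ket i = (\<lambda>k. if k = i then 1 else 0)"

text \<open>|i1 +- i2 +- ... +- ir> = (1/sqrt r) (+-|i1> +- ... ), given as a list of (sign, index)\<close>
definition superpos :: "(complex \<times> nat) list \<Rightarrow> cvec" where
  "superpos l = (\<lambda>k. complex_of_real (1 / sqrt (real (length l))) *
                      (\<Sum>p\<leftarrow>l. fst p * ket (snd p) k))"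

definition kminus :: "nat \<Rightarrow> nat \<Rightarrow> cvec" where
  "kminus a b = superpos [(1, a), (-1, b)]"

definition kstop :: "nat \<Rightarrow> cvec" where
  "kstop d = superpos (map (\<lambda>j. (1, j)) [0..<d])"

definition tens :: "cvec \<times> cvec \<times> cvec \<Rightarrow> tvec" where
  "tens s = (case s of (a, b, c) \<Rightarrow> (\<lambda>(i, j, k). a i * b j * c k))"

definition inner3 :: "nat \<times> nat \<times> nat \<Rightarrow> tvec \<Rightarrow> tvec \<Rightarrow> complex" where
  "inner3 D phi psi = (case D of (d1, d2, d3) \<Rightarrow>
     (\<Sum>i<d1. \<Sum>j<d2. \<Sum>k<d3. cnj (phi (i, j, k)) * psi (i, j, k)))"

definition dimof :: "nat \<Rightarrow> nat \<times> nat \<times> nat \<Rightarrow> nat" where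
  "dimof t D = (case D of (d1, d2, d3) \<Rightarrow> if t = 1 then d1 else if t = 2 then d2 else d3)"

definition lift_op :: "nat \<Rightarrow> nat \<times> nat \<times> nat \<Rightarrow> cmat \<Rightarrow> tvec \<Rightarrow> tvec" where
  "lift_op t D E psi = (case D of (d1, d2, d3) \<Rightarrow>
     (\<lambda>(i, j, k).
        if t = 1 then (\<Sum>i'<d1. E i i' * psi (i', j, k))
        else if t = 2 then (\<Sum>j'<d2. E j j' * psi (i, j', k))
        else (\<Sum>k'<d3. E k k' * psi (i, j, k'))))"

definition psd :: "nat \<Rightarrow> cmat \<Rightarrow> bool" where
  "psd d E \<longleftrightarrow> (\<forall>i<d. \<forall>j<d. E i j = cnj (E j i)) \<and>
     (\<forall>x :: cvec. 0 \<le> Re (\<Sum>i<d. \<Sum>j<d. cnj (x i) * E i j * x j))"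

definition prop_id :: "nat \<Rightarrow> cmat \<Rightarrow> bool" where
  "prop_id d E \<longleftrightarrow> (\<exists>c. \<forall>i<d. \<forall>j<d. E i j = (if i = j then c else 0))"

definition pairwise_orth :: "nat \<times> nat \<times> nat \<Rightarrow> (cvec \<times> cvec \<times> cvec) list \<Rightarrow> bool" where
  "pairwise_orth D S \<longleftrightarrow> (\<forall>a<length S. \<forall>b<length S. a \<noteq> b \<longrightarrow>
      inner3 D (tens (S ! a)) (tens (S ! b)) = 0)"

definition orth_preserving :: "nat \<times> nat \<times> nat \<Rightarrow> (cvec \<times> cvec \<times> cvec) list \<Rightarrow> nat \<Rightarrow> cmat \<Rightarrow> bool" where
  "orth_preserving D S t E \<longleftrightarrow> (\<forall>a<length S. \<forall>b<length S. a \<noteq> b \<longrightarrow>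
      inner3 D (tens (S ! a)) (lift_op t D E (tens (S ! b))) = 0)"

definition m_idx :: "nat \<Rightarrow> nat" where
  "m_idx i = (if even i then 2 else 1)"

definition states :: "nat \<Rightarrow> nat \<Rightarrow> nat \<Rightarrow> (cvec \<times> cvec \<times> cvec) list" where
  "states d1 d2 d3 =
     [(kminus 0 i, ket 0, ket i). i \<leftarrow> [1..<d1]] @
     [(ket i, kminus 0 i, ket 0). i \<leftarrow> [1..<d1]] @
     [(ket 0, ket i, kminus 0 i). i \<leftarrow> [1..<d2]] @
     [(ket 1, kminus 0 i, ket i). i \<leftarrow> [d1..<d2]] @
     [(ket (m_idx i), ket 1, kminus (i - 1) i). i \<leftarrow> [d2..<d3]] @
     [(kminus 0 2, kminus 0 2, ket i). i \<leftarrow> [d1..<d3]] @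
     [(kstop d1, kstop d2, kstop d3)]"

end

theory Submission
  imports Defs
begin

definition ip :: "nat \<Rightarrow> cvec \<Rightarrow> cvec \<Rightarrow> complex" where
  "ip d a b = (\<Sum>i<d. cnj (a i) * b i)"
definition app :: "nat \<Rightarrow> cmat \<Rightarrow> cvec \<Rightarrow> cvec" where
  "app d E b = (\<lambda>i. \<Sum>j<d. E i j * b j)"
lemma triple: fixes f g h :: "_ \<Rightarrow> complex" shows "(\<Sum>i\<in>A. \<Sum>j\<in>B. \<Sum>k\<in>C. f i * (g j * h k)) = sum f A * (sum g B * sum h C)"
proof -
  have "sum f A * (sum g B * sum h C) = (\<Sum>i\<in>A. f i * (sum g B * sum h C))" by (simp only: sum_distrib_right)
  also have "\<dots> = (\<Sum>i\<in>A. \<Sum>j\<in>B. \<Sum>k\<in>C. f i * (g j * h k))"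
    by (intro sum.cong refl) (subst sum_product, simp add: sum_distrib_left)
  finally show ?thesis by simp
qed
lemma lift1: "lift_op 1 (d1,d2,d3) E psi = (\<lambda>(i,j,k). \<Sum>i'<d1. E i i' * psi (i',j,k))"
  by (simp add: lift_op_def)
lemma lift2: "lift_op 2 (d1,d2,d3) E psi = (\<lambda>(i,j,k). \<Sum>j'<d2. E j j' * psi (i,j',k))"
  by (simp add: lift_op_def)
lemma lift3: "lift_op 3 (d1,d2,d3) E psi = (\<lambda>(i,j,k). \<Sum>k'<d3. E k k' * psi (i,j,k'))"
  by (simp add: lift_op_def)

lemma inner_tens:
  "inner3 (d1,d2,d3) (tens (a1,a2,a3)) (tens (b1,b2,b3)) = ip d1 a1 b1 * ip d2 a2 b2 * ip d3 a3 b3"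
proof -
  have "inner3 (d1,d2,d3) (tens (a1,a2,a3)) (tens (b1,b2,b3)) =
     (\<Sum>i<d1. \<Sum>j<d2. \<Sum>k<d3. (cnj (a1 i) * b1 i) * ((cnj (a2 j) * b2 j) * (cnj (a3 k) * b3 k)))"
    unfolding inner3_def tens_def by (simp add: mult_ac)
  also have "\<dots> = ip d1 a1 b1 * ip d2 a2 b2 * ip d3 a3 b3"
    unfolding ip_def triple by (simp only: mult.assoc)
  finally show ?thesis .
qed

lemma inner_lift1:
  "inner3 (d1,d2,d3) (tens (a1,a2,a3)) (lift_op 1 (d1,d2,d3) E (tens (b1,b2,b3)))
   = ip d1 a1 (app d1 E b1) * ip d2 a2 b2 * ip d3 a3 b3"
proof -
  have "inner3 (d1,d2,d3) (tens (a1,a2,a3)) (lift_op 1 (d1,d2,d3) E (tens (b1,b2,b3))) =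
     (\<Sum>i<d1. \<Sum>j<d2. \<Sum>k<d3. (cnj (a1 i) * app d1 E b1 i) * ((cnj (a2 j) * b2 j) * (cnj (a3 k) * b3 k)))"
    unfolding inner3_def tens_def lift1 app_def
    apply (simp only: prod.case) by (intro sum.cong refl) (simp add: sum_distrib_left sum_distrib_right mult_ac)
  also have "\<dots> = ip d1 a1 (app d1 E b1) * ip d2 a2 b2 * ip d3 a3 b3"
    unfolding ip_def triple by (simp only: mult.assoc)
  finally show ?thesis .
qed

lemma inner_lift2:
  "inner3 (d1,d2,d3) (tens (a1,a2,a3)) (lift_op 2 (d1,d2,d3) E (tens (b1,b2,b3)))
   = ip d1 a1 b1 * ip d2 a2 (app d2 E b2) * ip d3 a3 b3"
proof -
  have "inner3 (d1,d2,d3) (tens (a1,a2,a3)) (lift_op 2 (d1,d2,d3) E (tens (b1,b2,b3))) =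
     (\<Sum>i<d1. \<Sum>j<d2. \<Sum>k<d3. (cnj (a1 i) * b1 i) * ((cnj (a2 j) * app d2 E b2 j) * (cnj (a3 k) * b3 k)))"
    unfolding inner3_def tens_def lift2 app_def
    apply (simp only: prod.case) by (intro sum.cong refl) (simp add: sum_distrib_left sum_distrib_right mult_ac)
  also have "\<dots> = ip d1 a1 b1 * ip d2 a2 (app d2 E b2) * ip d3 a3 b3"
    unfolding ip_def triple by (simp only: mult.assoc)
  finally show ?thesis .
qed

lemma inner_lift3:
  "inner3 (d1,d2,d3) (tens (a1,a2,a3)) (lift_op 3 (d1,d2,d3) E (tens (b1,b2,b3)))
   = ip d1 a1 b1 * ip d2 a2 b2 * ip d3 a3 (app d3 E b3)"
proof -
  have "inner3 (d1,d2,d3) (tens (a1,a2,a3)) (lift_op 3 (d1,d2,d3) E (tens (b1,b2,b3))) =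
     (\<Sum>i<d1. \<Sum>j<d2. \<Sum>k<d3. (cnj (a1 i) * b1 i) * ((cnj (a2 j) * b2 j) * (cnj (a3 k) * app d3 E b3 k)))"
    unfolding inner3_def tens_def lift3 app_def
    apply (simp only: prod.case) by (intro sum.cong refl) (simp add: sum_distrib_left sum_distrib_right mult_ac)
  also have "\<dots> = ip d1 a1 b1 * ip d2 a2 b2 * ip d3 a3 (app d3 E b3)"
    unfolding ip_def triple by (simp only: mult.assoc)
  finally show ?thesis .
qed
definition pw :: "('a \<Rightarrow> 'a \<Rightarrow> bool) \<Rightarrow> 'a list \<Rightarrow> bool" where
  "pw R S \<longleftrightarrow> (\<forall>a<length S. \<forall>b<length S. a \<noteq> b \<longrightarrow> R (S ! a) (S ! b))"

lemma pw_append: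
  "pw R (xs @ ys) \<longleftrightarrow> pw R xs \<and> pw R ys \<and> (\<forall>x\<in>set xs. \<forall>y\<in>set ys. R x y \<and> R y x)"
proof
  assume H: "pw R (xs @ ys)"
  have "pw R xs" unfolding pw_def
  proof (intro allI impI)
    fix a b assume "a < length xs" "b < length xs" "a \<noteq> b"
    then show "R (xs!a) (xs!b)" using H unfolding pw_def
      by (metis add.commute le_add1 length_append nth_append order_less_le_trans)
  qed
  moreover have "pw R ys" unfolding pw_def
  proof (intro allI impI)
    fix a b assume "a < length ys" "b < length ys" "a \<noteq> b"
    then show "R (ys!a) (ys!b)" using H[unfolded pw_def, rule_format, of "length xs + a" "length xs + b"]
      by (simp add: nth_append)
  qed
  moreover have "\<forall>x\<in>set xs. \<forall>y\<in>set ys. R x y \<and> R y x"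
  proof (intro ballI)
    fix x y assume "x \<in> set xs" "y \<in> set ys"
    then obtain a b where ab: "a < length xs" "xs!a = x" "b < length ys" "ys!b = y"
      by (auto simp: in_set_conv_nth)
    show "R x y \<and> R y x"
      using H[unfolded pw_def, rule_format, of a "length xs + b"]
        H[unfolded pw_def, rule_format, of "length xs + b" a] ab
      by (simp add: nth_append)
  qed
  ultimately show "pw R xs \<and> pw R ys \<and> (\<forall>x\<in>set xs. \<forall>y\<in>set ys. R x y \<and> R y x)" by blast
next
  assume H: "pw R xs \<and> pw R ys \<and> (\<forall>x\<in>set xs. \<forall>y\<in>set ys. R x y \<and> R y x)"
  show "pw R (xs @ ys)" unfolding pw_def
  proof (intro allI impI)
    fix a b assume ab: "a < length (xs@ys)" "b < length (xs@ys)" "a \<noteq> b"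
    show "R ((xs@ys)!a) ((xs@ys)!b)"
    proof (cases "a < length xs"; cases "b < length xs")
      assume "a < length xs" "b < length xs" then show ?thesis using H ab by (simp add: nth_append pw_def)
    next
      assume "a < length xs" "\<not> b < length xs" then show ?thesis using H ab by (simp add: nth_append)
    next
      assume "\<not> a < length xs" "b < length xs" then show ?thesis using H ab by (simp add: nth_append)
    next
      assume "\<not> a < length xs" "\<not> b < length xs" then show ?thesis using H ab
        by (simp add: nth_append pw_def)
    qed
  qed
qed

lemma pw_map:
  "distinct xs \<Longrightarrow> pw R (map f xs) \<longleftrightarrow> (\<forall>i\<in>set xs. \<forall>j\<in>set xs. i \<noteq> j \<longrightarrow> R (f i) (f j))"
  unfolding pw_def by (auto simp: in_set_conv_nth nth_eq_iff_index_eq) (meson nth_eq_iff_index_eq nth_mem)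

lemma pw_single: "pw R [x]" by (simp add: pw_def)

definition rs :: "nat \<Rightarrow> complex" where "rs n = complex_of_real (1 / sqrt (real n))"

lemma rs_nz[simp]: "0 < n \<Longrightarrow> rs n \<noteq> 0"
  by (simp add: rs_def)
lemma rs2[simp]: "rs 2 \<noteq> 0" by (simp add: rs_def)
lemma cnj_rs[simp]: "cnj (rs n) = rs n" by (simp add: rs_def)

lemma ket_app: "ket i k = (if k = i then 1 else 0)" by (simp add: ket_def)

lemma ket_cnj[simp]: "cnj (ket i k) = ket i k" by (simp add: ket_def)

lemma kminus_val: "kminus a b k = rs 2 * (ket a k - ket b k)"
  by (simp add: kminus_def superpos_def algebra_simps rs_def)

lemma sum_list_ket: "(\<Sum>x\<leftarrow>[0..<d]. ket x k) = (if k < d then 1 else 0)"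
  by (simp add: sum_list_sum_nth ket_def atLeast0LessThan)

lemma kstop_val: "kstop d k = (if k < d then rs d else 0)"
  by (simp add: kstop_def superpos_def o_def sum_list_ket rs_def)

lemma sum_ket_mult: "i < d \<Longrightarrow> (\<Sum>k<d. ket i k * v k) = v i"
proof -
  assume "i < d"
  have "(\<Sum>k<d. ket i k * v k) = (\<Sum>k<d. if k = i then v k else 0)"
    by (intro sum.cong) (auto simp: ket_def)
  then show ?thesis using \<open>i<d\<close> by simp
qed
lemma sum_ket_mult': "i < d \<Longrightarrow> (\<Sum>k<d. v k * ket i k) = v i"
  using sum_ket_mult[of i d v] by (simp add: mult.commute)

lemma ip_ket[simp]: "i < d \<Longrightarrow> ip d (ket i) v = v i"
  by (simp add: ip_def sum_ket_mult)

lemma ip_kminus[simp]: "a < d \<Longrightarrow> b < d \<Longrightarrow> ip d (kminus a b) v = rs 2 * (v a - v b)"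
proof -
  assume "a < d" "b < d"
  have "ip d (kminus a b) v = (\<Sum>k<d. rs 2 * (ket a k * v k - ket b k * v k))"
    unfolding ip_def by (intro sum.cong) (simp_all add: kminus_val algebra_simps)
  also have "\<dots> = rs 2 * ((\<Sum>k<d. ket a k * v k) - (\<Sum>k<d. ket b k * v k))"
    by (simp add: sum_distrib_left[symmetric] sum_subtractf)
  finally show ?thesis using \<open>a < d\<close> \<open>b < d\<close> by (simp add: sum_ket_mult)
qed

lemma ip_kstop[simp]: "ip d (kstop d) v = rs d * sum v {..<d}"
  by (simp add: ip_def kstop_val sum_distrib_left)

lemma app_ket[simp]: "j < d \<Longrightarrow> app d E (ket j) = (\<lambda>i. E i j)"
  by (simp add: app_def sum_ket_mult')

lemma app_kminus[simp]: "a < d \<Longrightarrow> b < d \<Longrightarrow> app d E (kminus a b) = (\<lambda>i. rs 2 * (E i a - E i b))"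
  by (simp add: app_def kminus_val algebra_simps sum_subtractf sum_distrib_left[symmetric] sum_ket_mult sum_ket_mult')

lemma app_kstop[simp]: "app d E (kstop d) = (\<lambda>i. rs d * (\<Sum>j<d. E i j))"
  by (simp add: app_def kstop_val sum_distrib_left mult_ac)

lemma sum_ket[simp]: "i < d \<Longrightarrow> sum (ket i) {..<d} = 1"
  by (simp add: ket_def)
lemma sum_kminus[simp]: "a < d \<Longrightarrow> b < d \<Longrightarrow> sum (kminus a b) {..<d} = 0"
  by (simp add: kminus_val sum_subtractf sum_distrib_left[symmetric])

lemma sum_kminus_eta: "(a::nat) < d \<Longrightarrow> b < d \<Longrightarrow> (\<Sum>x<d. rs 2 * ((if x = a then 1 else 0) - (if x = b then 1 else 0))) = 0"
  using sum_kminus[of a d b] by (simp add: kminus_val ket_app)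

lemma g5:
  assumes "3 \<le> d1" "d2 \<le> i" "i < d3" "d2 \<le> j" "j < d3" "i \<noteq> j" "3 \<le> d2"
  shows "inner3 (d1,d2,d3) (tens (ket (m_idx i), ket 1, kminus (i - 1) i)) (tens (ket (m_idx j), ket 1, kminus (j - 1) j)) = 0"
proof (cases "even i = even j")
  case True
  have "i - 1 \<noteq> j" "j - 1 \<noteq> i" "i - 1 \<noteq> j - 1" using True assms by presburger+
  then have "ip d3 (kminus (i - 1) i) (kminus (j - 1) j) = 0"
    using assms by (simp add: kminus_val ket_app)
  then show ?thesis by (simp add: inner_tens)
next
  case False
  have "m_idx i \<noteq> m_idx j" "m_idx i < d1" "m_idx j < d1" using False assms by (auto simp: m_idx_def)
  then have "ip d1 (ket (m_idx i)) (ket (m_idx j)) = 0"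
    by (simp add: ket_app)
  then show ?thesis by (simp add: inner_tens)
qed
lemma sum_offdiag: "i < (d::nat) \<Longrightarrow> (\<forall>j<d. j \<noteq> i \<longrightarrow> E i j = 0) \<Longrightarrow> (\<Sum>j<d. E i j) = E i i"
proof -
  assume a: "i < d" "\<forall>j<d. j \<noteq> i \<longrightarrow> E i j = 0"
  have "(\<Sum>j<d. E i j) = (\<Sum>j\<in>{i}. E i j)" using a by (intro sum.mono_neutral_right) auto
  then show ?thesis by simp
qed

lemma prop_id_intro: "(\<forall>i<(d::nat). \<forall>j<d. i \<noteq> j \<longrightarrow> E i j = 0) \<Longrightarrow> (\<forall>i<d. E i i = E 0 0) \<Longrightarrow> prop_id d E"
proof -
  assume a: "\<forall>i<d. \<forall>j<d. i \<noteq> j \<longrightarrow> E i j = 0" and b: "\<forall>i<d. E i i = E 0 0"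
  show ?thesis unfolding prop_id_def
  proof (intro exI allI impI)
    fix i j assume ij: "i < d" "j < d"
    show "E i j = (if i = j then E 0 0 else 0)"
    proof (cases "i = j")
      case True then show ?thesis using b[rule_format, OF ij(1)] by simp
    next
      case False then show ?thesis using a ij by auto
    qed
  qed
qed

lemma pw_right: "pw R (xs @ ys) \<Longrightarrow> pw R ys" by (simp add: pw_append)
lemma pw_ext: "pw R (xs @ ys) \<Longrightarrow> x \<in> set xs \<Longrightarrow> y \<in> set ys \<Longrightarrow> R x y" by (simp add: pw_append)
lemma pw_ext': "pw R (xs @ ys) \<Longrightarrow> x \<in> set xs \<Longrightarrow> y \<in> set ys \<Longrightarrow> R y x" by (simp add: pw_append)
lemma pw_left: "pw R (xs @ ys) \<Longrightarrow> pw R xs" by (simp add: pw_append)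
lemma pw_in: "pw R (map f [a..<b] @ ys) \<Longrightarrow> a \<le> i \<Longrightarrow> i < b \<Longrightarrow> a \<le> j \<Longrightarrow> j < b \<Longrightarrow> i \<noteq> j \<Longrightarrow> R (f i) (f j)"
proof -
  assume "pw R (map f [a..<b] @ ys)" "a \<le> i" "i < b" "a \<le> j" "j < b" "i \<noteq> j"
  then have "pw R (map f [a..<b])" using pw_left by blast
  then have "\<forall>i\<in>set [a..<b]. \<forall>j\<in>set [a..<b]. i \<noteq> j \<longrightarrow> R (f i) (f j)" by (simp only: pw_map[OF distinct_upt])
  then show ?thesis using \<open>a \<le> i\<close> \<open>i < b\<close> \<open>a \<le> j\<close> \<open>j < b\<close> \<open>i \<noteq> j\<close> by simp
qed
lemma map_mem: "a \<le> i \<Longrightarrow> i < b \<Longrightarrow> f i \<in> set (map f [a..<b])" by auto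
lemma map_mem_app: "a \<le> i \<Longrightarrow> i < b \<Longrightarrow> f i \<in> set (map f [a..<b] @ ys)" by auto
lemma in_app_r: "x \<in> set ys \<Longrightarrow> x \<in> set (xs @ ys)" by auto
lemma in_single: "x \<in> set [x]" by auto

lemma orth_pw:
  assumes "3 \<le> d1" "d1 \<le> d2" "d2 \<le> d3"
  shows "pw (\<lambda>x y. inner3 (d1,d2,d3) (tens x) (tens y) = 0) (states d1 d2 d3)"
    unfolding states_def
    apply (simp only: pw_append pw_map[OF distinct_upt] pw_single set_append set_map ball_Un ball_simps(9) simp_thms
       set_upt list.set)
    apply (intro conjI)
    subgoal using assms by (auto simp: inner_tens ket_app kminus_val kstop_val m_idx_def sum_kminus_eta)
    subgoal using assms by (auto simp: inner_tens ket_app kminus_val kstop_val m_idx_def sum_kminus_eta)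
    subgoal using assms by (auto simp: inner_tens ket_app kminus_val kstop_val m_idx_def sum_kminus_eta)
    subgoal using assms by (auto simp: inner_tens ket_app kminus_val kstop_val m_idx_def sum_kminus_eta)
    subgoal using assms by (intro ballI impI g5) auto
    subgoal using assms by (auto simp: inner_tens ket_app kminus_val kstop_val m_idx_def sum_kminus_eta)
    subgoal using assms by (auto simp: inner_tens ket_app kminus_val kstop_val m_idx_def sum_kminus_eta)
    subgoal using assms by (auto simp: inner_tens ket_app kminus_val kstop_val m_idx_def sum_kminus_eta)
    subgoal using assms by (auto simp: inner_tens ket_app kminus_val kstop_val m_idx_def sum_kminus_eta)
    subgoal using assms by (auto simp: inner_tens ket_app kminus_val kstop_val m_idx_def sum_kminus_eta)
    subgoal using assms by (auto simp: inner_tens ket_app kminus_val kstop_val m_idx_def sum_kminus_eta)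
    subgoal using assms by (auto simp: inner_tens ket_app kminus_val kstop_val m_idx_def sum_kminus_eta)
    done

lemma party1:
  assumes d: "3 \<le> d1" "d1 \<le> d2" "d2 \<le> d3"
    and op: "orth_preserving (d1,d2,d3) (states d1 d2 d3) 1 E"
  shows "prop_id d1 E"
proof -
  define R where "R = (\<lambda>x y. inner3 (d1,d2,d3) (tens x) (lift_op 1 (d1,d2,d3) E (tens y)) = 0)"
  have "pw R (states d1 d2 d3)" using op by (simp add: orth_preserving_def pw_def R_def)
  then have H: "pw R ([(kminus 0 i, ket 0, ket i). i \<leftarrow> [1..<d1]] @
     [(ket i, kminus 0 i, ket 0). i \<leftarrow> [1..<d1]] @
     [(ket 0, ket i, kminus 0 i). i \<leftarrow> [1..<d2]] @
     [(ket 1, kminus 0 i, ket i). i \<leftarrow> [d1..<d2]] @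
     [(ket (m_idx i), ket 1, kminus (i - 1) i). i \<leftarrow> [d2..<d3]] @
     [(kminus 0 2, kminus 0 2, ket i). i \<leftarrow> [d1..<d3]] @
     [(kstop d1, kstop d2, kstop d3)])" unfolding states_def .
  note H2 = pw_right[OF H]
  have off: "\<forall>i<d1. \<forall>j<d1. i \<noteq> j \<longrightarrow> E i j = 0"
  proof (intro allI impI)
    fix i j assume ij: "i < d1" "j < d1" "i \<noteq> j"
    show "E i j = 0"
    proof (cases "i = 0")
      case True
      then have "1 \<le> j" using ij by auto
      have "R (ket 0, ket j, kminus 0 j) (ket j, kminus 0 j, ket 0)"
        apply (rule pw_ext'[OF H2])
        subgoal by (rule map_mem) (use \<open>1 \<le> j\<close> ij in auto)
        subgoal by (rule map_mem_app) (use \<open>1 \<le> j\<close> ij d in auto)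
        done
      then show ?thesis using True ij d unfolding R_def inner_lift1 by (simp add: ket_app kminus_val)
    next
      case False
      show ?thesis
      proof (cases "j = 0")
        case True
        have "R (ket i, kminus 0 i, ket 0) (ket 0, ket i, kminus 0 i)"
          apply (rule pw_ext[OF H2])
          subgoal by (rule map_mem) (use False ij in auto)
          subgoal by (rule map_mem_app) (use False ij d in auto)
          done
        then show ?thesis using True ij d unfolding R_def inner_lift1 by (simp add: ket_app kminus_val)
      next
        case j: False
        have "R (ket i, kminus 0 i, ket 0) (ket j, kminus 0 j, ket 0)"
          by (rule pw_in[OF H2]) (use j ij False in auto)
        then show ?thesis using j ij d False unfolding R_def inner_lift1 by (simp add: ket_app kminus_val)
      qed
    qed
  qed
  have "\<forall>i<d1. E i i = E 0 0"
  proof (intro allI impI)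
    fix i assume i: "i < d1"
    show "E i i = E 0 0"
    proof (cases "i = 0")
      case False
      have "R (kminus 0 i, ket 0, ket i) (kstop d1, kstop d2, kstop d3)"
        apply (rule pw_ext[OF H])
        subgoal by (rule map_mem) (use False i in auto)
        subgoal by (intro in_app_r in_single)
        done
      then have "rs 2 * (rs d1 * (\<Sum>j<d1. E 0 j) - rs d1 * (\<Sum>j<d1. E i j)) * rs d2 * rs d3 = 0"
        using i d False unfolding R_def inner_lift1 by (simp add: ket_app kstop_val)
      moreover have "(\<Sum>j<d1. E 0 j) = E 0 0" "(\<Sum>j<d1. E i j) = E i i"
        using off i d by (auto intro!: sum_offdiag)
      ultimately show ?thesis using d by (simp add: right_diff_distrib[symmetric])
    qed simp
  qed
  then show ?thesis using off by (intro prop_id_intro)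
qed
lemma party2:
  assumes d: "3 \<le> d1" "d1 \<le> d2" "d2 \<le> d3"
    and op: "orth_preserving (d1,d2,d3) (states d1 d2 d3) 2 E"
  shows "prop_id d2 E"
proof -
  define R where "R = (\<lambda>x y. inner3 (d1,d2,d3) (tens x) (lift_op 2 (d1,d2,d3) E (tens y)) = 0)"
  have "pw R (states d1 d2 d3)" using op by (simp add: orth_preserving_def pw_def R_def)
  then have H: "pw R ([(kminus 0 i, ket 0, ket i). i \<leftarrow> [1..<d1]] @
     [(ket i, kminus 0 i, ket 0). i \<leftarrow> [1..<d1]] @
     [(ket 0, ket i, kminus 0 i). i \<leftarrow> [1..<d2]] @
     [(ket 1, kminus 0 i, ket i). i \<leftarrow> [d1..<d2]] @
     [(ket (m_idx i), ket 1, kminus (i - 1) i). i \<leftarrow> [d2..<d3]] @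
     [(kminus 0 2, kminus 0 2, ket i). i \<leftarrow> [d1..<d3]] @
     [(kstop d1, kstop d2, kstop d3)])" unfolding states_def .
  note H2 = pw_right[OF H]
  note H3 = pw_right[OF H2]
  note H4 = pw_right[OF H3]
  have offA: "E i j = 0" if ij: "1 \<le> i" "i < d2" "1 \<le> j" "j < d2" "i \<noteq> j" for i j
  proof -
    have "R (ket 0, ket i, kminus 0 i) (ket 0, ket j, kminus 0 j)"
      by (rule pw_in[OF H3]) (use ij in auto)
    then show ?thesis using ij d unfolding R_def inner_lift2 by (simp add: ket_app kminus_val)
  qed
  have off0: "E 0 j = 0 \<and> E j 0 = 0" if j: "1 \<le> j" "j < d2" for j
  proof (cases "j < d1")
    case True
    have "R (kminus 0 j, ket 0, ket j) (ket 0, ket j, kminus 0 j)"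
      apply (rule pw_ext[OF H])
      subgoal by (rule map_mem) (use True j in auto)
      subgoal by (rule in_app_r, rule map_mem_app) (use True j in auto)
      done
    moreover have "R (ket 0, ket j, kminus 0 j) (kminus 0 j, ket 0, ket j)"
      apply (rule pw_ext'[OF H])
      subgoal by (rule map_mem) (use True j in auto)
      subgoal by (rule in_app_r, rule map_mem_app) (use True j in auto)
      done
    ultimately show ?thesis using True j d unfolding R_def inner_lift2 by (simp add: ket_app kminus_val)
  next
    case False
    have "R (kminus 0 2, kminus 0 2, ket j) (ket 0, ket j, kminus 0 j)"
      apply (rule pw_ext'[OF H3])
      subgoal by (rule map_mem) (use False j in auto)
      subgoal by (rule in_app_r, rule in_app_r, rule map_mem_app) (use False j d in auto)
      done
    moreover have "R (ket 0, ket j, kminus 0 j) (kminus 0 2, kminus 0 2, ket j)"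
      apply (rule pw_ext[OF H3])
      subgoal by (rule map_mem) (use False j in auto)
      subgoal by (rule in_app_r, rule in_app_r, rule map_mem_app) (use False j d in auto)
      done
    moreover have "E 2 j = 0" "E j 2 = 0" using offA[of 2 j] offA[of j 2] False j d by auto
    ultimately show ?thesis using False j d unfolding R_def inner_lift2 by (simp add: ket_app kminus_val)
  qed
  have off: "\<forall>i<d2. \<forall>j<d2. i \<noteq> j \<longrightarrow> E i j = 0"
  proof (intro allI impI)
    fix i j assume ij: "i < d2" "j < d2" "i \<noteq> j"
    show "E i j = 0"
    proof (cases "i = 0")
      case True then show ?thesis using off0[of j] ij by auto
    next
      case False
      show ?thesis
      proof (cases "j = 0")
        case True then show ?thesis using off0[of i] ij False by auto
      next
        case False then show ?thesis using offA[of i j] ij \<open>i \<noteq> 0\<close> by auto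
      qed
    qed
  qed
  have "\<forall>i<d2. E i i = E 0 0"
  proof (intro allI impI)
    fix i assume i: "i < d2"
    show "E i i = E 0 0"
    proof (cases "i = 0")
      case False
      have "rs 2 * (rs d2 * (\<Sum>j<d2. E 0 j) - rs d2 * (\<Sum>j<d2. E i j)) = 0"
      proof (cases "i < d1")
        case True
        have "R (ket i, kminus 0 i, ket 0) (kstop d1, kstop d2, kstop d3)"
          apply (rule pw_ext[OF H2])
          subgoal by (rule map_mem) (use False True in auto)
          subgoal by (intro in_app_r in_single)
          done
        then show ?thesis using i d False True unfolding R_def inner_lift2 by (simp add: ket_app kstop_val)
      next
        case F: False
        have "R (ket 1, kminus 0 i, ket i) (kstop d1, kstop d2, kstop d3)"
          apply (rule pw_ext[OF H4])
          subgoal by (rule map_mem) (use F i in auto)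
          subgoal by (intro in_app_r in_single)
          done
        then show ?thesis using i d False F unfolding R_def inner_lift2 by (simp add: ket_app kstop_val)
      qed
      moreover have "(\<Sum>j<d2. E 0 j) = E 0 0" "(\<Sum>j<d2. E i j) = E i i"
        using off i d by (auto intro!: sum_offdiag)
      ultimately show ?thesis using d by (simp add: right_diff_distrib[symmetric])
    qed simp
  qed
  then show ?thesis using off by (intro prop_id_intro)
qed
lemma party3:
  assumes d: "3 \<le> d1" "d1 \<le> d2" "d2 \<le> d3"
    and op: "orth_preserving (d1,d2,d3) (states d1 d2 d3) 3 E"
  shows "prop_id d3 E"
proof -
  define R where "R = (\<lambda>x y. inner3 (d1,d2,d3) (tens x) (lift_op 3 (d1,d2,d3) E (tens y)) = 0)"
  have "pw R (states d1 d2 d3)" using op by (simp add: orth_preserving_def pw_def R_def)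
  then have H: "pw R ([(kminus 0 i, ket 0, ket i). i \<leftarrow> [1..<d1]] @
     [(ket i, kminus 0 i, ket 0). i \<leftarrow> [1..<d1]] @
     [(ket 0, ket i, kminus 0 i). i \<leftarrow> [1..<d2]] @
     [(ket 1, kminus 0 i, ket i). i \<leftarrow> [d1..<d2]] @
     [(ket (m_idx i), ket 1, kminus (i - 1) i). i \<leftarrow> [d2..<d3]] @
     [(kminus 0 2, kminus 0 2, ket i). i \<leftarrow> [d1..<d3]] @
     [(kstop d1, kstop d2, kstop d3)])" unfolding states_def .
  note H2 = pw_right[OF H]
  note H3 = pw_right[OF H2]
  note H4 = pw_right[OF H3]
  note H5 = pw_right[OF H4]
  note H6 = pw_right[OF H5]
  have ipk: "ip d1 (kminus 0 2) (kminus 0 j) \<noteq> 0" if "1 \<le> j" "j < d1" for j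
    using that d by (cases "j = 2") (auto simp: ket_app kminus_val)
  have ipk2: "ip d2 (kminus 0 2) (kminus 0 2) \<noteq> 0"
    using d by (auto simp: ket_app kminus_val)
  have ipk3: "ip d1 (kminus 0 2) (kminus 0 2) \<noteq> 0"
    using d by (auto simp: ket_app kminus_val)
  have off: "\<forall>i<d3. \<forall>j<d3. i \<noteq> j \<longrightarrow> E i j = 0"
  proof (intro allI impI)
    fix i j assume ij: "i < d3" "j < d3" "i \<noteq> j"
    consider "i = 0" | "1 \<le> i" "i < d1" | "d1 \<le> i" by linarith
    then show "E i j = 0"
    proof cases
      case 1
      consider "1 \<le> j" "j < d1" | "d1 \<le> j" using ij 1 by linarith
      then show ?thesis
      proof cases
        case 1
        have "R (ket j, kminus 0 j, ket 0) (kminus 0 j, ket 0, ket j)"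
          apply (rule pw_ext'[OF H])
          subgoal by (rule map_mem) (use 1 in auto)
          subgoal by (rule map_mem_app) (use 1 in auto)
          done
        then show ?thesis using 1 \<open>i = 0\<close> d unfolding R_def inner_lift3 by (simp add: ket_app kminus_val)
      next
        case 2
        have "R (ket 2, kminus 0 2, ket 0) (kminus 0 2, kminus 0 2, ket j)"
          apply (rule pw_ext[OF H2])
          subgoal by (rule map_mem) (use d in auto)
          subgoal by (rule in_app_r, rule in_app_r, rule in_app_r, rule map_mem_app) (use 2 ij in auto)
          done
        then show ?thesis using 2 \<open>i = 0\<close> d ij ipk2 unfolding R_def inner_lift3 by (simp add: ket_app kminus_val)
      qed
    next
      case 2
      consider "j = 0" | "1 \<le> j" "j < d1" | "d1 \<le> j" using ij by linarith
      then show ?thesis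
      proof cases
        case 1
        have "R (kminus 0 i, ket 0, ket i) (ket i, kminus 0 i, ket 0)"
          apply (rule pw_ext[OF H])
          subgoal by (rule map_mem) (use 2 in auto)
          subgoal by (rule map_mem_app) (use 2 in auto)
          done
        then show ?thesis using 1 2 d unfolding R_def inner_lift3 by (simp add: ket_app kminus_val)
      next
        case 3
        have "R (kminus 0 i, ket 0, ket i) (kminus 0 2, kminus 0 2, ket j)"
          apply (rule pw_ext[OF H])
          subgoal by (rule map_mem) (use 2 in auto)
          subgoal by (rule in_app_r, rule in_app_r, rule in_app_r, rule in_app_r, rule map_mem_app) (use 3 ij in auto)
          done
        moreover have "ip d1 (kminus 0 i) (kminus 0 2) \<noteq> 0"
          using 2 d by (cases "i = 2") (auto simp: ket_app kminus_val)
        ultimately show ?thesis using 3 2 d ij unfolding R_def inner_lift3 by (simp add: ket_app kminus_val)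
      next
        case 4: 2
        have "R (kminus 0 i, ket 0, ket i) (kminus 0 j, ket 0, ket j)"
          by (rule pw_in[OF H]) (use 2 4 ij in auto)
        then show ?thesis using 2 4 d ij unfolding R_def inner_lift3 by (simp add: ket_app kminus_val)
      qed
    next
      case 3
      consider "j = 0" | "1 \<le> j" "j < d1" | "d1 \<le> j" using ij by linarith
      then show ?thesis
      proof cases
        case 1
        have "R (kminus 0 2, kminus 0 2, ket i) (ket 2, kminus 0 2, ket 0)"
          apply (rule pw_ext'[OF H2])
          subgoal by (rule map_mem) (use d in auto)
          subgoal by (rule in_app_r, rule in_app_r, rule in_app_r, rule map_mem_app) (use 3 ij in auto)
          done
        then show ?thesis using 1 3 d ij ipk2 unfolding R_def inner_lift3 by (simp add: ket_app kminus_val)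
      next
        case 2
        have "R (kminus 0 2, kminus 0 2, ket i) (kminus 0 j, ket 0, ket j)"
          apply (rule pw_ext'[OF H])
          subgoal by (rule map_mem) (use 2 in auto)
          subgoal by (rule in_app_r, rule in_app_r, rule in_app_r, rule in_app_r, rule map_mem_app) (use 3 ij in auto)
          done
        then show ?thesis using 3 2 d ij ipk[OF 2] unfolding R_def inner_lift3 by (simp add: ket_app kminus_val)
      next
        case 4: 3
        have "R (kminus 0 2, kminus 0 2, ket i) (kminus 0 2, kminus 0 2, ket j)"
          by (rule pw_in[OF H6]) (use 3 4 ij in auto)
        then show ?thesis using 3 4 d ij ipk2 ipk3 unfolding R_def inner_lift3 by (simp add: ket_app kminus_val)
      qed
    qed
  qed
  have sums: "(\<Sum>j<d3. E i j) = E i i" if "i < d3" for i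
    using off that by (auto intro!: sum_offdiag)
  have diag1: "E 0 0 = E i i" if i: "1 \<le> i" "i < d2" for i
  proof -
    have "R (ket 0, ket i, kminus 0 i) (kstop d1, kstop d2, kstop d3)"
      apply (rule pw_ext[OF H3])
      subgoal by (rule map_mem) (use i in auto)
      subgoal by (intro in_app_r in_single)
      done
    then have "rs 2 * (rs d3 * (\<Sum>j<d3. E 0 j) - rs d3 * (\<Sum>j<d3. E i j)) = 0"
      using i d unfolding R_def inner_lift3 by (simp add: ket_app kstop_val)
    then show ?thesis using sums[of i] sums[of 0] i d by (simp add: right_diff_distrib[symmetric])
  qed
  have step: "E (i - 1) (i - 1) = E i i" if i: "d2 \<le> i" "i < d3" for i
  proof -
    have "R (ket (m_idx i), ket 1, kminus (i - 1) i) (kstop d1, kstop d2, kstop d3)"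
      apply (rule pw_ext[OF H5])
      subgoal by (rule map_mem) (use i in auto)
      subgoal by (intro in_app_r in_single)
      done
    moreover have "m_idx i < d1" using d by (simp add: m_idx_def)
    ultimately have "rs 2 * (rs d3 * (\<Sum>j<d3. E (i - 1) j) - rs d3 * (\<Sum>j<d3. E i j)) = 0"
      using i d unfolding R_def inner_lift3 by (simp add: ket_app kstop_val)
    then show ?thesis using sums[of i] sums[of "i - 1"] i d by (simp add: right_diff_distrib[symmetric])
  qed
  have "\<forall>i<d3. E i i = E 0 0"
  proof (intro allI impI)
    fix i assume "i < d3" then show "E i i = E 0 0"
    proof (induction i)
      case (Suc n)
      show ?case
      proof (cases "Suc n < d2")
        case True then show ?thesis using diag1[of "Suc n"] by simp
      next
        case False then show ?thesis using step[of "Suc n"] Suc by simp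
      qed
    qed simp
  qed
  then show ?thesis using off by (intro prop_id_intro)
qed
theorem lemma4:
  fixes d1 d2 d3 :: nat
  assumes "3 \<le> d1" and "d1 \<le> d2" and "d2 \<le> d3"
  shows "length (states d1 d2 d3) = d2 + 2 * d3 - 2 \<and>
         pairwise_orth (d1, d2, d3) (states d1 d2 d3) \<and>
         (\<forall>t \<in> {1, 2, 3}. \<forall>E. psd (dimof t (d1, d2, d3)) E \<and>
             orth_preserving (d1, d2, d3) (states d1 d2 d3) t E
             \<longrightarrow> prop_id (dimof t (d1, d2, d3)) E)"
proof (intro conjI)
  show "length (states d1 d2 d3) = d2 + 2 * d3 - 2" using assms by (simp add: states_def)
  show "pairwise_orth (d1, d2, d3) (states d1 d2 d3)"
    using orth_pw[OF assms] by (simp add: pairwise_orth_def pw_def)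
  show "\<forall>t \<in> {1, 2, 3}. \<forall>E. psd (dimof t (d1, d2, d3)) E \<and>
             orth_preserving (d1, d2, d3) (states d1 d2 d3) t E
             \<longrightarrow> prop_id (dimof t (d1, d2, d3)) E"
  proof (intro ballI allI impI)
    fix t E assume t: "t \<in> {1::nat, 2, 3}" and h: "psd (dimof t (d1, d2, d3)) E \<and>
             orth_preserving (d1, d2, d3) (states d1 d2 d3) t E"
    from t consider "t = 1" | "t = 2" | "t = 3" by auto
    then show "prop_id (dimof t (d1, d2, d3)) E"
    proof cases
      case 1 then show ?thesis using party1[OF assms] h by (simp add: dimof_def)
    next
      case 2 then show ?thesis using party2[OF assms] h by (simp add: dimof_def)
    next
      case 3 then show ?thesis using party3[OF assms] h by (simp add: dimof_def)
    qed
  qed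
qed

end
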